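(* Let $\langle E,\rightarrow\rangle$ be a computation, $b_1,b_2$ regular predicates and $b=b_1\wedge b_2$. The graph $S_{\min}(E)$ has the same set of consistent cuts as the slice of $\langle E,\rightarrow\rangle$ with respect to $b$.
   Context: A computation is a directed graph $\langle E, \rightarrow\rangle$ whose vertices (events) are partitioned among processes $p_1,\dots,p_n$; events on each process are totally ordered, each process has an initial event and a final event, the path relation contains Lamport's happened-before relation, and all initial (resp. final) events lie in one strongly connected component. $\top$ is the set of final events and $\mathrm{succ}(e)$ the successor of $e$ on its process. A vertex subset $C$ is a consistent cut if for every edge $(u,v)$, $v\in C$ implies $u\in C$. A predicate is regular if whenever consistent cuts $C_1,C_2$ satisfy it, so do $C_1\cap C_2$ and $C_1\cup C_2$. The slice with respect to a predicate $c$ is a directed graph on $E$ whose consistent cuts include every consistent cut satisfying $c$ and which has the fewest consistent cuts among all such graphs. $F_c(e)[i]$ is the earliest event on $p_i$ reachable from $e$ in the slice with respect to $c$. $F_{\min}(e)[i]$ is whichever of $F_{b_1}(e)[i]$, $F_{b_2}(e)[i]$ occurs earlier on $p_i$. $S_{\min}(E)$ is the directed graph on $E$ with edges from each $e\notin\top$ to $\mathrm{succ}(e)$ and from each $e$ to $F_{\min}(e)[i]$ for every $i$. *)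

theory Defs
  imports Main
begin

text \<open>Events are pairs (i,k): the k-th event of process i (processes 0..n-1,
  process i has events 0..m i; (i,0) is initial, (i, m i) is final).\<close>

type_synonym event = "nat \<times> nat"

definition events :: "nat \<Rightarrow> (nat \<Rightarrow> nat) \<Rightarrow> event set" where
  "events n m = {(i,k). i < n \<and> k \<le> m i}"

definition final_events :: "nat \<Rightarrow> (nat \<Rightarrow> nat) \<Rightarrow> event set" where
  "final_events n m = {(i, m i) | i. i < n}"

definition succ_ev :: "event \<Rightarrow> event" where
  "succ_ev e = (fst e, Suc (snd e))"

definition computation :: "nat \<Rightarrow> (nat \<Rightarrow> nat) \<Rightarrow> event rel \<Rightarrow> bool" where
  "computation n m R \<longleftrightarrow>
     0 < n \<and>
     R \<subseteq> events n m \<times> events n m \<and>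
     (\<forall>i<n. \<forall>k<m i. ((i,k),(i,Suc k)) \<in> R\<^sup>+) \<and>
     (\<forall>i<n. \<forall>j<n. ((i,0),(j,0)) \<in> R\<^sup>*) \<and>
     (\<forall>i<n. \<forall>j<n. ((i, m i),(j, m j)) \<in> R\<^sup>*)"

definition consistent_cut :: "'a set \<Rightarrow> 'a rel \<Rightarrow> 'a set \<Rightarrow> bool" where
  "consistent_cut E R C \<longleftrightarrow> C \<subseteq> E \<and> (\<forall>(u,v)\<in>R. v \<in> C \<longrightarrow> u \<in> C)"

definition cuts :: "'a set \<Rightarrow> 'a rel \<Rightarrow> 'a set set" where
  "cuts E R = {C. consistent_cut E R C}"

definition regular :: "'a set \<Rightarrow> 'a rel \<Rightarrow> ('a set \<Rightarrow> bool) \<Rightarrow> bool" where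
  "regular E R b \<longleftrightarrow>
     (\<forall>C1 C2. consistent_cut E R C1 \<and> consistent_cut E R C2 \<and> b C1 \<and> b C2
        \<longrightarrow> b (C1 \<inter> C2) \<and> b (C1 \<union> C2))"

definition is_slice :: "'a set \<Rightarrow> 'a rel \<Rightarrow> ('a set \<Rightarrow> bool) \<Rightarrow> 'a rel \<Rightarrow> bool" where
  "is_slice E R c S \<longleftrightarrow>
     S \<subseteq> E \<times> E \<and>
     {C. consistent_cut E R C \<and> c C} \<subseteq> cuts E S \<and>
     (\<forall>S'. S' \<subseteq> E \<times> E \<and> {C. consistent_cut E R C \<and> c C} \<subseteq> cuts E S'
        \<longrightarrow> card (cuts E S) \<le> card (cuts E S'))"

definition F_reach :: "(nat \<Rightarrow> nat) \<Rightarrow> event rel \<Rightarrow> event \<Rightarrow> nat \<Rightarrow> event" where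
  "F_reach m S e i = (i, LEAST k. k \<le> m i \<and> (e, (i,k)) \<in> S\<^sup>*)"

definition F_min :: "(nat \<Rightarrow> nat) \<Rightarrow> event rel \<Rightarrow> event rel \<Rightarrow> event \<Rightarrow> nat \<Rightarrow> event" where
  "F_min m S1 S2 e i = (i, min (snd (F_reach m S1 e i)) (snd (F_reach m S2 e i)))"

definition S_min :: "nat \<Rightarrow> (nat \<Rightarrow> nat) \<Rightarrow> event rel \<Rightarrow> event rel \<Rightarrow> event rel" where
  "S_min n m S1 S2 =
     {(e, succ_ev e) | e. e \<in> events n m \<and> e \<notin> final_events n m} \<union>
     {(e, F_min m S1 S2 e i) | e i. e \<in> events n m \<and> i < n}"

end

theory Submission
  imports Defs
begin

lemma cc_trancl:
  assumes "consistent_cut E R C" "(u,v) \<in> R\<^sup>+" "v \<in> C" shows "u \<in> C"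
proof -
  have "v \<in> C \<longrightarrow> u \<in> C" using assms(2)
  proof (induction rule: trancl_induct)
    case (base y) then show ?case using assms(1) by (auto simp: consistent_cut_def)
  next
    case (step y z) then show ?case using assms(1) by (auto simp: consistent_cut_def)
  qed
  then show ?thesis using assms(3) by simp
qed

lemma cc_rtrancl:
  assumes "consistent_cut E R C" "(u,v) \<in> R\<^sup>*" "v \<in> C" shows "u \<in> C"
  using assms cc_trancl by (metis rtrancl_eq_or_trancl)

lemma cc_proc:
  assumes comp: "computation n m R" and cc: "consistent_cut (events n m) R C"
  shows "(i,k) \<in> C \<Longrightarrow> d \<le> k \<Longrightarrow> (i,k-d) \<in> C"
proof (induction d)
  case 0 then show ?case by simp
next
  case (Suc d)
  then have h: "(i, k-d) \<in> C" by simp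
  have "(i,k) \<in> events n m" using Suc.prems cc by (auto simp: consistent_cut_def)
  then have i: "i < n" "k \<le> m i" by (auto simp: events_def)
  define j where "j = k - Suc d"
  have j: "Suc j = k - d" "j < m i" using Suc.prems i by (auto simp: j_def)
  have "((i,j),(i,Suc j)) \<in> R\<^sup>+" using comp i(1) j(2) unfolding computation_def by blast
  then have "(i,j) \<in> C" using cc_trancl[OF cc] h j by metis
  then show ?case by (simp add: j_def)
qed

lemma cc_proc':
  assumes comp: "computation n m R" and cc: "consistent_cut (events n m) R C"
  and "(i,k) \<in> C" "k' \<le> k" shows "(i,k') \<in> C"
  using cc_proc[OF comp cc, of i k "k - k'"] assms by simp

lemma cc_final:
  assumes comp: "computation n m R" and cc: "consistent_cut (events n m) R C"
  and i: "i < n" and f: "(i, m i) \<in> C"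
  shows "C = events n m"
proof
  show "C \<subseteq> events n m" using cc by (simp add: consistent_cut_def)
  show "events n m \<subseteq> C"
  proof
    fix x assume "x \<in> events n m"
    then obtain j k where x: "x = (j,k)" "j < n" "k \<le> m j" by (auto simp: events_def)
    have "((j, m j),(i, m i)) \<in> R\<^sup>*" using comp i x by (auto simp: computation_def)
    then have "(j, m j) \<in> C" using cc_rtrancl[OF cc] f by metis
    then show "x \<in> C" using cc_proc'[OF comp cc] x by metis
  qed
qed

lemma fam_closed:
  assumes cl: "\<And>A B. A\<in>L \<Longrightarrow> B\<in>L \<Longrightarrow> A\<inter>B \<in> L \<and> A\<union>B \<in> L"
    and "{} \<in> L" "E \<in> L" and LE: "\<forall>A\<in>L. A \<subseteq> E" and "finite F" "F \<subseteq> L"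
  shows "E \<inter> \<Inter>F \<in> L \<and> \<Union>F \<in> L"
  using assms(5,6)
proof (induction F rule: finite_induct)
  case empty then show ?case using assms(2,3) by simp
next
  case (insert x F)
  then have x: "x \<in> L" "x \<subseteq> E" and ih: "E \<inter> \<Inter>F \<in> L" "\<Union>F \<in> L" using LE by auto
  have "E \<inter> \<Inter>(insert x F) = x \<inter> (E \<inter> \<Inter>F)" using x by auto
  moreover have "\<Union>(insert x F) = x \<union> \<Union>F" by auto
  ultimately show ?case using cl[OF x(1) ih(1)] cl[OF x(1) ih(2)] by simp
qed

lemma slice_char:
  assumes fin: "finite E" and sl: "is_slice E R c S"
  and cl: "\<And>C1 C2. consistent_cut E R C1 \<Longrightarrow> consistent_cut E R C2 \<Longrightarrow> c C1 \<Longrightarrow> c C2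
              \<Longrightarrow> c (C1\<inter>C2) \<and> c (C1\<union>C2)"
  shows "cuts E S = {C. consistent_cut E R C \<and> c C} \<union> {{}, E}"
proof -
  define L where "L = {C. consistent_cut E R C \<and> c C} \<union> {{}, E}"
  have LE: "\<forall>A\<in>L. A \<subseteq> E" by (auto simp: L_def consistent_cut_def)
  have L0: "{} \<in> L" "E \<in> L" by (auto simp: L_def)
  have Lcl: "A\<inter>B \<in> L \<and> A\<union>B \<in> L" if A: "A\<in>L" and B: "B\<in>L" for A B
  proof -
    have AE: "A \<subseteq> E" "B \<subseteq> E" using A B LE by auto
    show ?thesis
    proof (cases "A = {} \<or> A = E \<or> B = {} \<or> B = E")
      case True
      then show ?thesis using A B L0 AE by (auto simp: Int_absorb1 Int_absorb2 Un_absorb1 Un_absorb2)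
    next
      case False
      then have "consistent_cut E R A" "c A" "consistent_cut E R B" "c B"
        using A B by (auto simp: L_def)
      moreover have "consistent_cut E R (A\<inter>B)" "consistent_cut E R (A\<union>B)"
        using calculation by (auto simp: consistent_cut_def)
      ultimately show ?thesis using cl by (auto simp: L_def)
    qed
  qed
  define S' where "S' = {(u,v). u\<in>E \<and> v\<in>E \<and> (\<forall>C\<in>L. v\<in>C \<longrightarrow> u\<in>C)}"
  have S'E: "S' \<subseteq> E \<times> E" by (auto simp: S'_def)
  have finL: "finite L" using fin LE by (meson Pow_iff finite_Pow_iff finite_subset subsetI)
  have cS': "cuts E S' = L"
  proof
    show "L \<subseteq> cuts E S'" using LE by (auto simp: cuts_def consistent_cut_def S'_def)
    show "cuts E S' \<subseteq> L"
    proof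
      fix D assume "D \<in> cuts E S'"
      hence DE: "D \<subseteq> E" and Dc: "\<And>u v. (u,v)\<in>S' \<Longrightarrow> v\<in>D \<Longrightarrow> u\<in>D"
        by (auto simp: cuts_def consistent_cut_def)
      define J where "J v = E \<inter> \<Inter>{C\<in>L. v\<in>C}" for v
      have JL: "J v \<in> L" for v
        using fam_closed[OF Lcl L0 LE, of "{C\<in>L. v\<in>C}"] finL by (auto simp: J_def)
      have JD: "J v \<subseteq> D" if "v \<in> D" for v
      proof
        fix u assume "u \<in> J v"
        then have "(u,v) \<in> S'" using that DE by (auto simp: J_def S'_def)
        then show "u \<in> D" using Dc that by blast
      qed
      have vJ: "v \<in> J v" if "v \<in> D" for v using that DE by (auto simp: J_def)
      have "D = \<Union>(J ` D)" using JD vJ by blast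
      moreover have "\<Union>(J ` D) \<in> L"
        using fam_closed[OF Lcl L0 LE, of "J ` D"] JL DE fin by (auto intro: finite_subset)
      ultimately show "D \<in> L" by simp
    qed
  qed
  have SE: "S \<subseteq> E \<times> E" using sl by (simp add: is_slice_def)
  have Lsub: "L \<subseteq> cuts E S"
    using sl SE by (auto simp: L_def is_slice_def cuts_def consistent_cut_def)
  have fcuts: "finite (cuts E S)"
    using fin by (rule finite_subset[rotated, OF finite_Pow_iff[THEN iffD2]]) (auto simp: cuts_def consistent_cut_def)
  have min: "\<And>S''. S'' \<subseteq> E \<times> E \<Longrightarrow> {C. consistent_cut E R C \<and> c C} \<subseteq> cuts E S''
        \<Longrightarrow> card (cuts E S) \<le> card (cuts E S'')"
    using sl unfolding is_slice_def by blast
  have "{C. consistent_cut E R C \<and> c C} \<subseteq> cuts E S'" using cS' by (auto simp: L_def)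
  then have "card (cuts E S) \<le> card (cuts E S')"
    using min[OF S'E] by blast
  then have "card (cuts E S) \<le> card L" using cS' by simp
  then have "L = cuts E S" using card_seteq[OF fcuts Lsub] by simp
  then show ?thesis by (simp add: L_def)
qed

lemma reach_cut:
  assumes "(e,f) \<in> S\<^sup>*" "C \<in> cuts E S" "f \<in> C" shows "e \<in> C"
  using assms cc_rtrancl by (metis cuts_def mem_Collect_eq)

lemma cut_reach:
  assumes SE: "S \<subseteq> E \<times> E" and f: "f \<in> E" and e: "e \<in> E"
    and all: "\<forall>C\<in>cuts E S. f\<in>C \<longrightarrow> e\<in>C"
  shows "(e,f) \<in> S\<^sup>*"
proof -
  define Cf where "Cf = {u\<in>E. (u,f) \<in> S\<^sup>*}"
  have "Cf \<in> cuts E S"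
    unfolding cuts_def consistent_cut_def Cf_def
    using SE by (auto intro: converse_rtrancl_into_rtrancl)
  moreover have "f \<in> Cf" using f by (simp add: Cf_def)
  ultimately have "e \<in> Cf" using all by blast
  then show ?thesis by (simp add: Cf_def)
qed

lemma slice_down:
  assumes comp: "computation n m R"
    and ch: "cuts (events n m) S = {C. consistent_cut (events n m) R C \<and> c C} \<union> {{}, events n m}"
    and D: "D \<in> cuts (events n m) S" and ik: "(i,k) \<in> D" and kk: "k' \<le> k"
  shows "(i,k') \<in> D"
proof -
  have "D = {} \<or> D = events n m \<or> consistent_cut (events n m) R D" using D ch by auto
  then show ?thesis
  proof (elim disjE)
    assume "D = {}" then show ?thesis using ik by simp
  next
    assume "D = events n m" then show ?thesis using ik kk by (auto simp: events_def)
  next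
    assume "consistent_cut (events n m) R D"
    then show ?thesis using cc_proc'[OF comp] ik kk by blast
  qed
qed

lemma slice_reach_final:
  assumes comp: "computation n m R"
    and ch: "cuts (events n m) S = {C. consistent_cut (events n m) R C \<and> c C} \<union> {{}, events n m}"
    and SE: "S \<subseteq> events n m \<times> events n m"
    and e: "e \<in> events n m" and i: "i < n"
  shows "(e,(i,m i)) \<in> S\<^sup>*"
proof (rule cut_reach[OF SE])
  show "(i, m i) \<in> events n m" using i by (simp add: events_def)
  show "e \<in> events n m" by fact
  show "\<forall>C\<in>cuts (events n m) S. (i, m i) \<in> C \<longrightarrow> e \<in> C"
  proof (intro ballI impI)
    fix C assume C: "C \<in> cuts (events n m) S" and f: "(i, m i) \<in> C"
    have "C = {} \<or> C = events n m \<or> consistent_cut (events n m) R C" using C ch by auto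
    then have "C = events n m" using f cc_final[OF comp _ i f] by auto
    then show "e \<in> C" using e by simp
  qed
qed

lemma F_reach_props:
  assumes "(e,(i,m i)) \<in> S\<^sup>*"
  shows "snd (F_reach m S e i) \<le> m i \<and> (e,(i, snd (F_reach m S e i))) \<in> S\<^sup>*"
    and "k \<le> m i \<Longrightarrow> (e,(i,k)) \<in> S\<^sup>* \<Longrightarrow> snd (F_reach m S e i) \<le> k"
proof -
  have ex: "m i \<le> m i \<and> (e,(i,m i)) \<in> S\<^sup>*" using assms by simp
  show "snd (F_reach m S e i) \<le> m i \<and> (e,(i, snd (F_reach m S e i))) \<in> S\<^sup>*"
    unfolding F_reach_def snd_conv by (rule LeastI[of "\<lambda>k. k \<le> m i \<and> (e,(i,k)) \<in> S\<^sup>*" "m i", OF ex])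
  show "k \<le> m i \<Longrightarrow> (e,(i,k)) \<in> S\<^sup>* \<Longrightarrow> snd (F_reach m S e i) \<le> k"
    unfolding F_reach_def snd_conv by (rule Least_le) simp
qed

lemma key:
  assumes comp: "computation n m R"
    and ch1: "cuts (events n m) S1 = {C. consistent_cut (events n m) R C \<and> c1 C} \<union> {{}, events n m}"
    and ch2: "cuts (events n m) S2 = {C. consistent_cut (events n m) R C \<and> c2 C} \<union> {{}, events n m}"
    and SE1: "S1 \<subseteq> events n m \<times> events n m"
    and SE2: "S2 \<subseteq> events n m \<times> events n m"
  shows "cuts (events n m) (S_min n m S1 S2) = cuts (events n m) S1 \<inter> cuts (events n m) S2"
proof -
  let ?E = "events n m"
  define k1 where "k1 e i = snd (F_reach m S1 e i)" for e i
  define k2 where "k2 e i = snd (F_reach m S2 e i)" for e i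
  have Fm: "F_min m S1 S2 e i = (i, min (k1 e i) (k2 e i))" for e i
    by (simp add: F_min_def k1_def k2_def)
  have r1: "(e,(i,m i)) \<in> S1\<^sup>*" if "e \<in> ?E" "i < n" for e i
    using slice_reach_final[OF comp ch1 SE1 that] .
  have r2: "(e,(i,m i)) \<in> S2\<^sup>*" if "e \<in> ?E" "i < n" for e i
    using slice_reach_final[OF comp ch2 SE2 that] .
  have k1a: "k1 e i \<le> m i \<and> (e,(i, k1 e i)) \<in> S1\<^sup>*"
    and k1b: "k \<le> m i \<Longrightarrow> (e,(i,k)) \<in> S1\<^sup>* \<Longrightarrow> k1 e i \<le> k"
    if "e \<in> ?E" "i < n" for e i k
    using F_reach_props[of e i m S1, OF r1[OF that]] by (auto simp: k1_def)
  have k2a: "k2 e i \<le> m i \<and> (e,(i, k2 e i)) \<in> S2\<^sup>*"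
    and k2b: "k \<le> m i \<Longrightarrow> (e,(i,k)) \<in> S2\<^sup>* \<Longrightarrow> k2 e i \<le> k"
    if "e \<in> ?E" "i < n" for e i k
    using F_reach_props[of e i m S2, OF r2[OF that]] by (auto simp: k2_def)
  have edges: "(u,v) \<in> S_min n m S1 S2 \<longleftrightarrow>
      (u \<in> ?E \<and> u \<notin> final_events n m \<and> v = succ_ev u) \<or>
      (\<exists>i<n. u \<in> ?E \<and> v = F_min m S1 S2 u i)" for u v
    unfolding S_min_def by blast
  show ?thesis
  proof
    show "cuts ?E (S_min n m S1 S2) \<subseteq> cuts ?E S1 \<inter> cuts ?E S2"
    proof
      fix D assume "D \<in> cuts ?E (S_min n m S1 S2)"
      then have DE: "D \<subseteq> ?E" and Dc: "\<And>u v. (u,v) \<in> S_min n m S1 S2 \<Longrightarrow> v \<in> D \<Longrightarrow> u \<in> D"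
        by (auto simp: cuts_def consistent_cut_def)
      have sc: "(i,k) \<in> D" if "(i, Suc k) \<in> D" for i k
      proof -
        have "(i, Suc k) \<in> ?E" using that DE by auto
        then have ik: "i < n" "Suc k \<le> m i" by (auto simp: events_def)
        then have "(i,k) \<in> ?E" "(i,k) \<notin> final_events n m"
          by (auto simp: events_def final_events_def)
        then have "((i,k), (i, Suc k)) \<in> S_min n m S1 S2"
          unfolding edges by (simp add: succ_ev_def)
        then show ?thesis using Dc that by blast
      qed
      have down: "\<forall>k'. (i,k) \<in> D \<longrightarrow> k' \<le> k \<longrightarrow> (i,k') \<in> D" for i k
      proof (induction k)
        case 0 then show ?case by simp
      next
        case (Suc k) then show ?case using sc by (metis le_Suc_eq)
      qed
      have fm: "u \<in> D" if "u \<in> ?E" "i < n" "F_min m S1 S2 u i \<in> D" for u i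
      proof -
        have "(u, F_min m S1 S2 u i) \<in> S_min n m S1 S2" unfolding edges using that by blast
        then show ?thesis using Dc that by blast
      qed
      have "D \<in> cuts ?E S1"
        unfolding cuts_def consistent_cut_def
      proof (intro CollectI conjI DE ballI impI, clarify)
        fix u i k assume uv: "(u,(i,k)) \<in> S1" and v: "(i,k) \<in> D"
        have uE: "u \<in> ?E" and vE: "(i,k) \<in> ?E" using uv SE1 by auto
        then have ik: "i < n" "k \<le> m i" by (auto simp: events_def)
        have "k1 u i \<le> k" using k1b[OF uE ik(1) ik(2)] uv by blast
        then have "(i, min (k1 u i) (k2 u i)) \<in> D" using down v by simp
        then show "u \<in> D" using fm[OF uE ik(1)] Fm by simp
      qed
      moreover have "D \<in> cuts ?E S2"
        unfolding cuts_def consistent_cut_def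
      proof (intro CollectI conjI DE ballI impI, clarify)
        fix u i k assume uv: "(u,(i,k)) \<in> S2" and v: "(i,k) \<in> D"
        have uE: "u \<in> ?E" and vE: "(i,k) \<in> ?E" using uv SE2 by auto
        then have ik: "i < n" "k \<le> m i" by (auto simp: events_def)
        have "k2 u i \<le> k" using k2b[OF uE ik(1) ik(2)] uv by blast
        then have "(i, min (k1 u i) (k2 u i)) \<in> D" using down v by simp
        then show "u \<in> D" using fm[OF uE ik(1)] Fm by simp
      qed
      ultimately show "D \<in> cuts ?E S1 \<inter> cuts ?E S2" by blast
    qed
  next
    show "cuts ?E S1 \<inter> cuts ?E S2 \<subseteq> cuts ?E (S_min n m S1 S2)"
    proof
      fix D assume D: "D \<in> cuts ?E S1 \<inter> cuts ?E S2"
      then have D1: "D \<in> cuts ?E S1" and D2: "D \<in> cuts ?E S2" by auto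
      have DE: "D \<subseteq> ?E" using D1 by (simp add: cuts_def consistent_cut_def)
      have "u \<in> D" if uv: "(u,v) \<in> S_min n m S1 S2" and v: "v \<in> D" for u v
      proof -
        from uv consider "u \<in> ?E" "u \<notin> final_events n m" "v = succ_ev u"
          | i where "i < n" "u \<in> ?E" "v = F_min m S1 S2 u i" unfolding edges by blast
        then show ?thesis
        proof cases
          case 1
          obtain i k where u: "u = (i,k)" by fastforce
          then have "v = (i, Suc k)" using 1 by (simp add: succ_ev_def)
          then show ?thesis using slice_down[OF comp ch1 D1, of i "Suc k" k] v u by simp
        next
          case 2
          note i = 2
          show ?thesis
          proof (cases "k1 u i \<le> k2 u i")
            case True
            then have "(i, k1 u i) \<in> D" using v i Fm by simp
            then show ?thesis using reach_cut[OF _ D1] k1a[OF i(2) i(1)] by blast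
          next
            case False
            then have "(i, k2 u i) \<in> D" using v i Fm by simp
            then show ?thesis using reach_cut[OF _ D2] k2a[OF i(2) i(1)] by blast
          qed
        qed
      qed
      then show "D \<in> cuts ?E (S_min n m S1 S2)"
        using DE by (auto simp: cuts_def consistent_cut_def)
    qed
  qed
qed

theorem theorem14:
  assumes "computation n m R"
    and "regular (events n m) R b1"
    and "regular (events n m) R b2"
    and "is_slice (events n m) R b1 S1"
    and "is_slice (events n m) R b2 S2"
    and "is_slice (events n m) R (\<lambda>C. b1 C \<and> b2 C) S"
  shows "cuts (events n m) (S_min n m S1 S2) = cuts (events n m) S"
proof -
  let ?E = "events n m"
  have fin: "finite ?E"
  proof -
    have "?E = Sigma {..<n} (\<lambda>i. {..m i})" by (auto simp: events_def)
    then show ?thesis by simp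
  qed
  have ch1: "cuts ?E S1 = {C. consistent_cut ?E R C \<and> b1 C} \<union> {{}, ?E}"
    using slice_char[OF fin assms(4)] assms(2) unfolding regular_def by blast
  have ch2: "cuts ?E S2 = {C. consistent_cut ?E R C \<and> b2 C} \<union> {{}, ?E}"
    using slice_char[OF fin assms(5)] assms(3) unfolding regular_def by blast
  have ch: "cuts ?E S = {C. consistent_cut ?E R C \<and> (b1 C \<and> b2 C)} \<union> {{}, ?E}"
    using slice_char[OF fin assms(6)] assms(2,3) unfolding regular_def by blast
  have SE1: "S1 \<subseteq> ?E \<times> ?E" using assms(4) by (simp add: is_slice_def)
  have SE2: "S2 \<subseteq> ?E \<times> ?E" using assms(5) by (simp add: is_slice_def)
  have "cuts ?E (S_min n m S1 S2) = cuts ?E S1 \<inter> cuts ?E S2"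
    by (rule key[OF assms(1) ch1 ch2 SE1 SE2])
  also have "\<dots> = cuts ?E S" unfolding ch1 ch2 ch by blast
  finally show ?thesis .
qed

end
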